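(* Let $\mathcal{L}:\mathbb{R}^m\to\mathbb{R}^m$ be a sufficiently smooth map, and consider the autonomous initial value problem $\frac{d\mathbf{u}}{dt}=\mathcal{L}(\mathbf{u})$, $\mathbf{u}(t_n)=\mathbf{u}^n$. Write $\mathcal{L}_{\mathbf{u}}=\frac{\partial \mathcal{L}}{\partial \mathbf{u}}$ for the Jacobian and $\frac{\partial}{\partial t}\mathcal{L}(\mathbf{u}):=\mathcal{L}_{\mathbf{u}}(\mathbf{u})\,\mathcal{L}(\mathbf{u})$ (the time derivative of $\mathcal{L}$ along solutions). For a step size $\Delta t>0$ and real parameters $A,B_0,B_1,C_0,C_1$, define the intermediate value $$\mathbf{u}^*=\mathbf{u}^n+A\Delta t\,\mathcal{L}(\mathbf{u}^n)+\tfrac12 A^2\Delta t^2\,\tfrac{\partial}{\partial t}\mathcal{L}(\mathbf{u}^n),$$ and the update $$\mathbf{u}^{n+1}=\mathbf{u}^n+\Delta t\big(B_0\mathcal{L}(\mathbf{u}^n)+B_1\mathcal{L}(\mathbf{u}^* )\big)+\tfrac12\Delta t^2\Big(C_0\tfrac{\partial}{\partial t}\mathcal{L}(\mathbf{u}^n)+C_1\tfrac{\partial}{\partial t}\mathcal{L}(\mathbf{u}^* )\Big).$$ If $A=\tfrac12$, $B_0=1$, $B_1=0$, $C_0=\tfrac13$, $C_1=\tfrac23$, then this two-stage iteration provides a fourth order accurate approximation to the exact solution $\mathbf{u}(t)$ at $t=t_n+\Delta t$, i.e. $\mathbf{u}^{n+1}-\mathbf{u}(t_n+\Delta t)=\mathcal{O}(\Delta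 t^5)$. Moreover, these values of $A,B_0,B_1,C_0,C_1$ are uniquely determined by this fourth order accuracy requirement (i.e., they are the only choice for which fourth order accuracy holds for all such $\mathcal{L}$).
   Context: Fourth order accuracy means the one-step (local) error $\mathbf{u}^{n+1}-\mathbf{u}(t_n+\Delta t)$ is $\mathcal{O}(\Delta t^5)$ as $\Delta t\to 0$, where $\mathbf{u}(t)$ is the exact solution of the initial value problem. *)

theory Defs
  imports "HOL-Analysis.Analysis" "HOL-Library.Landau_Symbols"
begin

definition partial_deriv :: "'m::finite \<Rightarrow> (real^'m \<Rightarrow> real^'m) \<Rightarrow> real^'m \<Rightarrow> real^'m" where
  "partial_deriv i g x = vector_derivative (\<lambda>t. g (x + t *\<^sub>R axis i 1)) (at 0)"

fun iter_partial :: "'m::finite list \<Rightarrow> (real^'m \<Rightarrow> real^'m) \<Rightarrow> real^'m \<Rightarrow> real^'m" where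
  "iter_partial [] g = g"
| "iter_partial (i # is) g = partial_deriv i (iter_partial is g)"

definition smooth_field :: "(real^'m::finite \<Rightarrow> real^'m) \<Rightarrow> bool" where
  "smooth_field L \<longleftrightarrow>
     (\<forall>is. continuous_on UNIV (iter_partial is L) \<and>
       (\<forall>i x. (\<lambda>t. iter_partial is L (x + t *\<^sub>R axis i 1)) differentiable (at 0)))"

definition dtL :: "(real^'m::finite \<Rightarrow> real^'m) \<Rightarrow> real^'m \<Rightarrow> real^'m" where
  "dtL L u = jacobian L (at u) *v L u"

definition two_stage_step ::
  "real \<Rightarrow> real \<Rightarrow> real \<Rightarrow> real \<Rightarrow> real \<Rightarrow> (real^'m::finite \<Rightarrow> real^'m) \<Rightarrow> real \<Rightarrow> real^'m \<Rightarrow> real^'m" where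
  "two_stage_step A B0 B1 C0 C1 L dt un =
     (let us = un + (A * dt) *\<^sub>R L un + (A\<^sup>2 * dt\<^sup>2 / 2) *\<^sub>R dtL L un
      in un + dt *\<^sub>R (B0 *\<^sub>R L un + B1 *\<^sub>R L us)
            + (dt\<^sup>2 / 2) *\<^sub>R (C0 *\<^sub>R dtL L un + C1 *\<^sub>R dtL L us))"

definition fourth_order_accurate ::
  "real \<Rightarrow> real \<Rightarrow> real \<Rightarrow> real \<Rightarrow> real \<Rightarrow> (real^'m::finite \<Rightarrow> real^'m) \<Rightarrow> bool" where
  "fourth_order_accurate A B0 B1 C0 C1 L \<longleftrightarrow>
     (\<forall>tn un (u :: real \<Rightarrow> real^'m) T. T > 0 \<and> u tn = un \<and>
        (\<forall>t\<in>{tn..tn+T}. (u has_vector_derivative L (u t)) (at t within {tn..tn+T})) \<longrightarrow>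
        (\<lambda>dt. norm (two_stage_step A B0 B1 C0 C1 L dt un - u (tn + dt)))
          \<in> O[at_right 0](\<lambda>dt. dt ^ 5))"

end

theory Submission
  imports Defs
begin

definition dirdiff :: "(real^'m::finite \<Rightarrow> real^'m) \<Rightarrow> bool" where
  "dirdiff g \<longleftrightarrow> (\<forall>i x. (\<lambda>t. g (x + t *\<^sub>R axis i 1)) differentiable (at 0))"

lemma iter_partial_append: "iter_partial (is @ js) g = iter_partial is (iter_partial js g)"
  by (induction "is") auto

lemma smooth_cont: "smooth_field g \<Longrightarrow> continuous_on UNIV g"
  unfolding smooth_field_def by (metis iter_partial.simps(1))

lemma smooth_dirdiff: "smooth_field g \<Longrightarrow> dirdiff g"
  unfolding smooth_field_def dirdiff_def by (metis iter_partial.simps(1))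

lemma smooth_pd: "smooth_field g \<Longrightarrow> smooth_field (partial_deriv i g)"
  unfolding smooth_field_def
  by (metis iter_partial_append iter_partial.simps)

lemma smooth_coind:
  assumes X: "\<And>g. g \<in> X \<Longrightarrow> continuous_on UNIV g \<and> dirdiff g \<and> (\<forall>i. partial_deriv i g \<in> X)"
    and g: "g \<in> X"
  shows "smooth_field g"
proof -
  have "iter_partial is g \<in> X" for "is"
    by (induction "is") (use g X in auto)
  then show ?thesis using X unfolding smooth_field_def dirdiff_def by blast
qed

lemma pd_has:
  assumes "dirdiff g"
  shows "((\<lambda>t. g (x + t *\<^sub>R axis i 1)) has_vector_derivative partial_deriv i g x) (at 0)"
  using assms unfolding dirdiff_def partial_deriv_def
  by (simp add: vector_derivative_works)

lemma pd_has_at: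
  assumes "dirdiff g"
  shows "((\<lambda>t. g (x + t *\<^sub>R axis i 1)) has_vector_derivative partial_deriv i g (x + s *\<^sub>R axis i 1)) (at s)"
proof -
  have 1: "((\<lambda>t. t - s) has_vector_derivative 1) (at s)"
    by (auto intro!: derivative_eq_intros)
  have 2: "((\<lambda>t. g ((x + s *\<^sub>R axis i 1) + t *\<^sub>R axis i 1)) has_vector_derivative
     partial_deriv i g (x + s *\<^sub>R axis i 1)) (at ((\<lambda>t. t - s) s))"
    using pd_has[OF assms] by simp
  have "((\<lambda>t. g ((x + s *\<^sub>R axis i 1) + t *\<^sub>R axis i 1)) \<circ> (\<lambda>t. t - s)) = (\<lambda>t. g (x + t *\<^sub>R axis i 1))"
    by (auto simp: o_def algebra_simps)
  with vector_diff_chain_at[OF 1 2] show ?thesis by simp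
qed

lemma onorm_scaleR_vec: "onorm (\<lambda>t::real. t *\<^sub>R (v::'a::real_normed_vector)) \<le> norm v"
  by (rule onorm_le) (simp add: mult.commute)

lemma Pnorm:
  fixes h :: "real^'m::finite"
  assumes "\<And>k. \<bar>y$k\<bar> \<le> \<bar>h$k\<bar>"
  shows "norm y \<le> norm h"
  using assms by (intro norm_le_componentwise_cart) simp

lemma P_nth: "(\<Sum>k\<in>S. (h$k) *\<^sub>R axis k (1::real)) $ i = (if i \<in> S then h$i else 0)" if "finite S"
  using that by (simp add: axis_def if_distrib sum.delta cong: if_cong)

lemma P_nth': "finite S \<Longrightarrow> (\<Sum>x\<in>S. (h::real^'m::finite)$x * (if k = x then 1 else 0)) = (if k \<in> S then h$k else 0)"
  by (simp add: if_distrib sum.delta cong: if_cong)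

lemma partials_has_derivative:
  fixes g :: "real^'m::finite \<Rightarrow> real^'m"
  assumes dd: "dirdiff g" and cont: "\<And>i. continuous_on UNIV (partial_deriv i g)"
  shows "(g has_derivative (\<lambda>v. \<Sum>i\<in>UNIV. v$i *\<^sub>R partial_deriv i g x)) (at x)"
proof -
  have Q: "\<forall>e>0. \<exists>d>0. \<forall>h. norm h < d \<longrightarrow>
      norm (g (x + (\<Sum>k\<in>S. h$k *\<^sub>R axis k 1)) - g x - (\<Sum>k\<in>S. h$k *\<^sub>R partial_deriv k g x)) \<le> e * norm h"
    for S :: "'m set"
  proof (induction S rule: infinite_finite_induct)
    case (infinite A) then show ?case by simp
  next
    case empty then show ?case by (auto intro!: exI[of _ 1])
  next
    case (insert j S)
    show ?case
    proof (intro allI impI)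
      fix e :: real assume e: "e > 0"
      obtain d1 where d1: "d1 > 0" and D1: "\<And>h. norm h < d1 \<Longrightarrow>
        norm (g (x + (\<Sum>k\<in>S. h$k *\<^sub>R axis k 1)) - g x - (\<Sum>k\<in>S. h$k *\<^sub>R partial_deriv k g x)) \<le> e/2 * norm h"
        using insert.IH e by (meson half_gt_zero)
      have "continuous (at x) (partial_deriv j g)"
        using cont[of j] by (simp add: continuous_on_eq_continuous_at)
      then obtain d2 where d2: "d2 > 0" and D2: "\<And>y. dist y x < d2 \<Longrightarrow> dist (partial_deriv j g y) (partial_deriv j g x) < e/2"
        unfolding continuous_at_eps_delta using e by (meson half_gt_zero)
      show "\<exists>d>0. \<forall>h. norm h < d \<longrightarrow>
        norm (g (x + (\<Sum>k\<in>insert j S. h$k *\<^sub>R axis k 1)) - g x - (\<Sum>k\<in>insert j S. h$k *\<^sub>R partial_deriv k g x)) \<le> e * norm h"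
      proof (intro exI[of _ "min d1 d2"] conjI allI impI)
        show "min d1 d2 > 0" using d1 d2 by simp
        fix h :: "real^'m" assume h: "norm h < min d1 d2"
        define y where "y = x + (\<Sum>k\<in>S. h$k *\<^sub>R axis k 1)"
        define \<psi> where "\<psi> = (\<lambda>t. g (y + t *\<^sub>R axis j 1) - t *\<^sub>R partial_deriv j g x)"
        define I where "I = closed_segment 0 (h$j)"
        have bnd: "norm (\<psi> (h$j) - \<psi> 0) \<le> e/2 * norm (h$j - 0)"
        proof (rule differentiable_bound[of I \<psi> "\<lambda>t. (\<lambda>\<tau>. \<tau> *\<^sub>R (partial_deriv j g (y + t *\<^sub>R axis j 1) - partial_deriv j g x))"])
          show "convex I" unfolding I_def by simp
          show "h$j \<in> I" "0 \<in> I" unfolding I_def by auto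
          fix t assume t: "t \<in> I"
          have "((\<lambda>t. g (y + t *\<^sub>R axis j 1)) has_vector_derivative partial_deriv j g (y + t *\<^sub>R axis j 1)) (at t)"
            by (rule pd_has_at[OF dd])
          then have "(\<psi> has_vector_derivative (partial_deriv j g (y + t *\<^sub>R axis j 1) - partial_deriv j g x)) (at t)"
            unfolding \<psi>_def by (auto intro!: derivative_eq_intros)
          then show "(\<psi> has_derivative (\<lambda>\<tau>. \<tau> *\<^sub>R (partial_deriv j g (y + t *\<^sub>R axis j 1) - partial_deriv j g x))) (at t within I)"
            unfolding has_vector_derivative_def by (rule has_derivative_at_withinI)
          have tj: "\<bar>t\<bar> \<le> \<bar>h$j\<bar>" using t unfolding I_def
            by (auto simp: closed_segment_eq_real_ivl split: if_splits)
          have "norm (y + t *\<^sub>R axis j 1 - x) \<le> norm h"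
          proof (rule Pnorm)
            fix k
            show "\<bar>(y + t *\<^sub>R axis j 1 - x) $ k\<bar> \<le> \<bar>h $ k\<bar>"
              unfolding y_def using tj insert.hyps
              using insert.hyps(2) by (cases "k = j") (simp_all add: P_nth'[OF insert.hyps(1)] axis_def)
          qed
          then have "dist (y + t *\<^sub>R axis j 1) x < d2" using h by (simp add: dist_norm)
          then have "norm (partial_deriv j g (y + t *\<^sub>R axis j 1) - partial_deriv j g x) \<le> e/2"
            using D2 by (simp add: dist_norm less_imp_le)
          then show "onorm (\<lambda>\<tau>. \<tau> *\<^sub>R (partial_deriv j g (y + t *\<^sub>R axis j 1) - partial_deriv j g x)) \<le> e/2"
            using onorm_scaleR_vec order_trans by blast
        qed
        have hj: "\<bar>h$j\<bar> \<le> norm h" by (rule component_le_norm_cart)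
        have A: "norm (g (y + h$j *\<^sub>R axis j 1) - g y - h$j *\<^sub>R partial_deriv j g x) \<le> e/2 * norm h"
        proof -
          have "\<psi> (h$j) - \<psi> 0 = g (y + h$j *\<^sub>R axis j 1) - g y - h$j *\<^sub>R partial_deriv j g x"
            by (simp add: \<psi>_def)
          then have "norm (g (y + h$j *\<^sub>R axis j 1) - g y - h$j *\<^sub>R partial_deriv j g x) \<le> e/2 * \<bar>h$j\<bar>"
            using bnd by simp
          also have "\<dots> \<le> e/2 * norm h" using hj e by (intro mult_left_mono) auto
          finally show ?thesis .
        qed
        have B: "norm (g y - g x - (\<Sum>k\<in>S. h$k *\<^sub>R partial_deriv k g x)) \<le> e/2 * norm h"
          using D1 h unfolding y_def by simp
        have eq: "g (x + (\<Sum>k\<in>insert j S. h$k *\<^sub>R axis k 1)) - g x - (\<Sum>k\<in>insert j S. h$k *\<^sub>R partial_deriv k g x)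
           = (g (y + h$j *\<^sub>R axis j 1) - g y - h$j *\<^sub>R partial_deriv j g x) + (g y - g x - (\<Sum>k\<in>S. h$k *\<^sub>R partial_deriv k g x))"
          using insert.hyps unfolding y_def by (simp add: algebra_simps)
        show "norm (g (x + (\<Sum>k\<in>insert j S. h$k *\<^sub>R axis k 1)) - g x - (\<Sum>k\<in>insert j S. h$k *\<^sub>R partial_deriv k g x)) \<le> e * norm h"
          unfolding eq by (rule norm_triangle_le) (use A B in linarith)
      qed
    qed
  qed
  have PU: "(\<Sum>k\<in>UNIV. h$k *\<^sub>R axis k 1) = h" for h :: "real^'m"
    by (simp add: vec_eq_iff axis_def P_nth'[of UNIV])
  have bl: "bounded_linear (\<lambda>v::real^'m. \<Sum>i\<in>UNIV. v$i *\<^sub>R partial_deriv i g x)"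
    by (intro bounded_linear_sum bounded_linear_compose[OF bounded_linear_scaleR_left bounded_linear_vec_nth])
  show ?thesis
    unfolding has_derivative_at_alt
  proof (intro conjI bl allI impI)
    fix e :: real assume "e > 0"
    then obtain d where "d > 0" and d: "\<And>h. norm h < d \<Longrightarrow>
      norm (g (x + h) - g x - (\<Sum>k\<in>UNIV. h$k *\<^sub>R partial_deriv k g x)) \<le> e * norm h"
      using Q[of UNIV] unfolding PU by blast
    show "\<exists>d>0. \<forall>y. norm (y - x) < d \<longrightarrow> norm (g y - g x - (\<Sum>i\<in>UNIV. (y - x) $ i *\<^sub>R partial_deriv i g x)) \<le> e * norm (y - x)"
      using \<open>d > 0\<close> d[of "_ - x"] by auto
  qed
qed

lemma smooth_has_derivative:
  assumes "smooth_field g"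
  shows "(g has_derivative (\<lambda>v. \<Sum>i\<in>UNIV. v$i *\<^sub>R partial_deriv i g x)) (at x)"
  by (rule partials_has_derivative) (use assms smooth_dirdiff smooth_cont smooth_pd in auto)

lemma vd_nth:
  assumes "(F has_vector_derivative F') (at t within s)"
  shows "((\<lambda>t. F t $ j) has_field_derivative (F' $ j)) (at t within s)"
proof -
  have "((\<lambda>t. F t $ j) has_derivative (\<lambda>r. (r *\<^sub>R F') $ j)) (at t within s)"
    using bounded_linear.has_derivative[OF bounded_linear_vec_nth assms[unfolded has_vector_derivative_def]] .
  moreover have "(\<lambda>r. (r *\<^sub>R F') $ j) = (*) (F' $ j)" by (auto simp: fun_eq_iff)
  ultimately show ?thesis by (simp add: has_field_derivative_def)
qed

definition tm :: "('m \<times> (real^'m::finite \<Rightarrow> real^'m) \<times> (real^'m \<Rightarrow> real^'m)) list \<Rightarrow> real^'m \<Rightarrow> real^'m" where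
  "tm ts x = sum_list (map (\<lambda>(j,f,h). f x $ j *\<^sub>R h x) ts)"

definition dts :: "'m::finite \<Rightarrow> ('m \<times> (real^'m \<Rightarrow> real^'m) \<times> (real^'m \<Rightarrow> real^'m)) list \<Rightarrow> ('m \<times> (real^'m \<Rightarrow> real^'m) \<times> (real^'m \<Rightarrow> real^'m)) list" where
  "dts i ts = concat (map (\<lambda>(j,f,h). [(j, partial_deriv i f, h), (j, f, partial_deriv i h)]) ts)"

lemma tm_simps[simp]: "tm [] x = 0" "tm ((j,f,h) # ts) x = f x $ j *\<^sub>R h x + tm ts x"
  by (simp_all add: tm_def)

lemma dts_simps[simp]: "dts i [] = []" "dts i ((j,f,h) # ts) = (j, partial_deriv i f, h) # (j, f, partial_deriv i h) # dts i ts"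
  by (simp_all add: dts_def)

lemma tm_has_vd:
  assumes "\<forall>(j,f,h)\<in>set ts. dirdiff f \<and> dirdiff h"
  shows "((\<lambda>t. tm ts (x + t *\<^sub>R axis i 1)) has_vector_derivative tm (dts i ts) x) (at 0)"
  using assms
proof (induction ts)
  case Nil then show ?case by simp
next
  case (Cons a ts)
  obtain j f h where a: "a = (j,f,h)" by (cases a) auto
  have df: "dirdiff f" and dh: "dirdiff h" using Cons.prems a by auto
  have 1: "((\<lambda>t. f (x + t *\<^sub>R axis i 1) $ j) has_field_derivative (partial_deriv i f x $ j)) (at 0)"
    by (rule vd_nth[OF pd_has[OF df]])
  have 2: "((\<lambda>t. h (x + t *\<^sub>R axis i 1)) has_vector_derivative partial_deriv i h x) (at 0)"
    by (rule pd_has[OF dh])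
  have "((\<lambda>t. f (x + t *\<^sub>R axis i 1) $ j *\<^sub>R h (x + t *\<^sub>R axis i 1) + tm ts (x + t *\<^sub>R axis i 1)) has_vector_derivative
     (f x $ j *\<^sub>R partial_deriv i h x + partial_deriv i f x $ j *\<^sub>R h x) + tm (dts i ts) x) (at 0)"
    using has_vector_derivative_scaleR[OF 1 2] Cons by (intro has_vector_derivative_add) auto
  then show ?case unfolding a by (simp add: algebra_simps)
qed

lemma tm_dirdiff:
  assumes "\<forall>(j,f,h)\<in>set ts. dirdiff f \<and> dirdiff h"
  shows "dirdiff (tm ts)"
  using tm_has_vd[OF assms] unfolding dirdiff_def
  by (meson differentiableI_vector)

lemma tm_pd:
  assumes "\<forall>(j,f,h)\<in>set ts. dirdiff f \<and> dirdiff h"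
  shows "partial_deriv i (tm ts) = tm (dts i ts)"
  using tm_has_vd[OF assms] unfolding partial_deriv_def
  by (auto intro!: ext vector_derivative_at)

lemma tm_cont:
  assumes "\<forall>(j,f,h)\<in>set ts. continuous_on UNIV f \<and> continuous_on UNIV h"
  shows "continuous_on UNIV (tm ts)"
  using assms
proof (induction ts)
  case Nil then show ?case by (simp add: tm_def)
next
  case (Cons a ts)
  obtain j f h where a: "a = (j,f,h)" by (cases a) auto
  have "continuous_on UNIV (\<lambda>x. f x $ j)"
    using Cons.prems a by (auto intro!: continuous_intros)
  then show ?case using Cons a unfolding tm_def by (auto intro!: continuous_intros)
qed

lemma dts_smooth:
  assumes "\<forall>(j,f,h)\<in>set ts. smooth_field f \<and> smooth_field h"
  shows "\<forall>(j,f,h)\<in>set (dts i ts). smooth_field f \<and> smooth_field h"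
  using assms unfolding dts_def by (auto simp: smooth_pd)

lemma tm_smooth:
  assumes "\<forall>(j,f,h)\<in>set ts. smooth_field f \<and> smooth_field h"
  shows "smooth_field (tm ts)"
proof (rule smooth_coind[where X = "{tm ts | ts. \<forall>(j,f,h)\<in>set ts. smooth_field f \<and> smooth_field h}"])
  fix g assume "g \<in> {tm ts | ts. \<forall>(j,f,h)\<in>set ts. smooth_field f \<and> smooth_field h}"
  then obtain ts where g: "g = tm ts" and ts: "\<forall>(j,f,h)\<in>set ts. smooth_field f \<and> smooth_field h" by auto
  have dd: "\<forall>(j,f,h)\<in>set ts. dirdiff f \<and> dirdiff h" using ts smooth_dirdiff by fast
  have cc: "\<forall>(j,f,h)\<in>set ts. continuous_on UNIV f \<and> continuous_on UNIV h" using ts smooth_cont by fast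
  show "continuous_on UNIV g \<and> dirdiff g \<and> (\<forall>i. partial_deriv i g \<in> {tm ts | ts. \<forall>(j,f,h)\<in>set ts. smooth_field f \<and> smooth_field h})"
    unfolding g using tm_cont[OF cc] tm_dirdiff[OF dd] tm_pd[OF dd] dts_smooth[OF ts] by blast
qed (use assms in blast)

definition Dop :: "(real^'m::finite \<Rightarrow> real^'m) \<Rightarrow> (real^'m \<Rightarrow> real^'m) \<Rightarrow> real^'m \<Rightarrow> real^'m" where
  "Dop L g x = (\<Sum>i\<in>UNIV. L x $ i *\<^sub>R partial_deriv i g x)"

lemma Dop_smooth:
  assumes L: "smooth_field L" and g: "smooth_field g"
  shows "smooth_field (Dop L g)"
proof -
  obtain xs :: "'a list" where xs: "set xs = UNIV" "distinct xs"
    using finite_distinct_list[of "UNIV :: 'a set"] by auto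
  have eq: "Dop L g = tm (map (\<lambda>i. (i, L, partial_deriv i g)) xs)"
  proof
    fix x
    have "tm (map (\<lambda>i. (i, L, partial_deriv i g)) xs) x = sum_list (map (\<lambda>i. L x $ i *\<^sub>R partial_deriv i g x) xs)"
      unfolding tm_def by (simp add: o_def)
    also have "\<dots> = (\<Sum>i\<in>UNIV. L x $ i *\<^sub>R partial_deriv i g x)"
      using xs by (simp add: sum_list_distinct_conv_sum_set)
    finally show "Dop L g x = tm (map (\<lambda>i. (i, L, partial_deriv i g)) xs) x" by (simp add: Dop_def)
  qed
  have "smooth_field (tm (map (\<lambda>i. (i, L, partial_deriv i g)) xs))"
    by (rule tm_smooth) (use L g smooth_pd in auto)
  then show ?thesis using eq by simp
qed

lemma dtL_eq:
  assumes L: "smooth_field L"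
  shows "dtL L x = Dop L L x"
proof -
  have d: "(L has_derivative (\<lambda>v. \<Sum>i\<in>UNIV. v$i *\<^sub>R partial_deriv i L x)) (at x)"
    by (rule smooth_has_derivative[OF L])
  then have "L differentiable (at x)" by (rule differentiableI)
  then have "(L has_derivative (\<lambda>h. jacobian L (at x) *v h)) (at x)" by (simp add: jacobian_works)
  from has_derivative_unique[OF d this] have "(\<lambda>v. \<Sum>i\<in>UNIV. v$i *\<^sub>R partial_deriv i L x) = (\<lambda>h. jacobian L (at x) *v h)" .
  then show ?thesis unfolding dtL_def Dop_def by metis
qed

lemma chain_Dop:
  assumes g: "smooth_field g" and u: "(u has_vector_derivative L (u t)) (at t within S)"
  shows "((\<lambda>t. g (u t)) has_vector_derivative Dop L g (u t)) (at t within S)"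
proof -
  have "(g has_derivative (\<lambda>v. \<Sum>i\<in>UNIV. v$i *\<^sub>R partial_deriv i g (u t))) (at (u t) within u ` S)"
    using smooth_has_derivative[OF g] by (rule has_derivative_at_withinI)
  from vector_derivative_diff_chain_within[OF u this] show ?thesis
    by (simp add: o_def Dop_def)
qed

lemma int_bound:
  fixes g g' :: "real \<Rightarrow> 'a::real_normed_vector"
  assumes C: "C \<ge> 0"
    and d: "\<And>t. t \<in> {a..a+T} \<Longrightarrow> (g has_vector_derivative g' t) (at t within {a..a+T})"
    and b: "\<And>s. s \<in> {0..T} \<Longrightarrow> norm (g' (a+s)) \<le> C * s^n"
    and g0: "g a = 0"
    and s: "s \<in> {0..T}"
  shows "norm (g (a+s)) \<le> C * s^(Suc n)"
proof -
  have "norm (g (a+s) - g a) \<le> (C * s^n) * norm ((a+s) - a)"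
  proof (rule differentiable_bound[of "{a..a+s}" g "\<lambda>t. (\<lambda>\<tau>. \<tau> *\<^sub>R g' t)"])
    show "convex {a..a+s}" by simp
    show "a + s \<in> {a..a+s}" "a \<in> {a..a+s}" using s by auto
    fix t assume t: "t \<in> {a..a+s}"
    then have "t \<in> {a..a+T}" using s by auto
    from has_vector_derivative_within_subset[OF d[OF this], of "{a..a+s}"]
    show "(g has_derivative (\<lambda>\<tau>. \<tau> *\<^sub>R g' t)) (at t within {a..a+s})"
      using s by (auto simp: has_vector_derivative_def)
    have "norm (g' (a + (t - a))) \<le> C * (t-a)^n" using b[of "t - a"] t s by auto
    also have "\<dots> \<le> C * s^n" using t C by (intro mult_left_mono power_mono) auto
    finally have "norm (g' t) \<le> C * s^n" by simp
    then show "onorm (\<lambda>\<tau>. \<tau> *\<^sub>R g' t) \<le> C * s^n"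
      using onorm_scaleR_vec order_trans by blast
  qed
  then have "norm (g (a+s)) \<le> C * s^n * s" using g0 s by simp
  also have "\<dots> = C * s^(Suc n)" by (simp only: power_Suc2 mult.assoc)
  finally show ?thesis .
qed

lemma smooth_lipschitz:
  assumes g: "smooth_field g"
  obtains K where "K \<ge> 0" "\<And>x y. x \<in> cball x0 1 \<Longrightarrow> y \<in> cball x0 1 \<Longrightarrow> norm (g x - g y) \<le> K * norm (x - y)"
proof -
  have "continuous_on (cball x0 1) (\<lambda>z. \<Sum>i\<in>UNIV. norm (partial_deriv i g z))"
    using smooth_cont[OF smooth_pd[OF g]] by (auto intro!: continuous_intros intro: continuous_on_subset)
  then have "compact ((\<lambda>z. \<Sum>i\<in>UNIV. norm (partial_deriv i g z)) ` cball x0 1)"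
    by (intro compact_continuous_image) auto
  then obtain B where B: "\<And>z. z \<in> cball x0 1 \<Longrightarrow> norm (\<Sum>i\<in>UNIV. norm (partial_deriv i g z)) \<le> B"
  proof -
    assume *: "\<And>B. (\<And>z. z \<in> cball x0 1 \<Longrightarrow> norm (\<Sum>i\<in>UNIV. norm (partial_deriv i g z)) \<le> B) \<Longrightarrow> thesis"
    from \<open>compact _\<close> have "bounded ((\<lambda>z. \<Sum>i\<in>UNIV. norm (partial_deriv i g z)) ` cball x0 1)"
      by (rule compact_imp_bounded)
    then obtain B where "\<forall>x\<in>(\<lambda>z. \<Sum>i\<in>UNIV. norm (partial_deriv i g z)) ` cball x0 1. norm x \<le> B"
      unfolding bounded_iff by blast
    then show thesis by (intro *) auto
  qed
  have B0: "B \<ge> 0" using B[of x0] norm_ge_zero[of "\<Sum>i\<in>UNIV. norm (partial_deriv i g x0)"] by simp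
  show ?thesis
  proof (rule that[OF B0])
    fix x y assume x: "x \<in> cball x0 1" and y: "y \<in> cball x0 1"
    show "norm (g x - g y) \<le> B * norm (x - y)"
    proof (rule differentiable_bound[of "cball x0 1" g "\<lambda>z. (\<lambda>v. \<Sum>i\<in>UNIV. v$i *\<^sub>R partial_deriv i g z)"])
      show "convex (cball x0 1)" by simp
      show "x \<in> cball x0 1" "y \<in> cball x0 1" using x y by auto
      fix z assume z: "z \<in> cball x0 1"
      show "(g has_derivative (\<lambda>v. \<Sum>i\<in>UNIV. v$i *\<^sub>R partial_deriv i g z)) (at z within cball x0 1)"
        using smooth_has_derivative[OF g] by (rule has_derivative_at_withinI)
      show "onorm (\<lambda>v. \<Sum>i\<in>UNIV. v$i *\<^sub>R partial_deriv i g z) \<le> B"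
      proof (rule onorm_le)
        fix v :: "real^'a"
        have "norm (\<Sum>i\<in>UNIV. v$i *\<^sub>R partial_deriv i g z) \<le> (\<Sum>i\<in>UNIV. norm (v$i *\<^sub>R partial_deriv i g z))"
          by (rule norm_sum)
        also have "\<dots> \<le> (\<Sum>i\<in>UNIV. norm v * norm (partial_deriv i g z))"
          by (intro sum_mono) (simp add: component_le_norm_cart mult_right_mono)
        also have "\<dots> = norm v * (\<Sum>i\<in>UNIV. norm (partial_deriv i g z))"
          by (simp add: sum_distrib_left)
        also have "\<dots> \<le> norm v * B"
          using B[OF z] by (intro mult_left_mono) auto
        finally show "norm (\<Sum>i\<in>UNIV. v$i *\<^sub>R partial_deriv i g z) \<le> B * norm v" by (simp add: mult.commute)
      qed
    qed
  qed
qed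

definition Fk :: "(real^'m::finite \<Rightarrow> real^'m) \<Rightarrow> nat \<Rightarrow> real^'m \<Rightarrow> real^'m" where
  "Fk L k = (Dop L ^^ k) L"

lemma Fk_0[simp]: "Fk L 0 = L" and Fk_Suc: "Fk L (Suc k) = Dop L (Fk L k)"
  by (simp_all add: Fk_def)

lemma Fk_smooth: "smooth_field L \<Longrightarrow> smooth_field (Fk L k)"
  by (induction k) (simp_all add: Fk_Suc Dop_smooth)

lemma poly_vd:
  "((\<lambda>t. ((t - a)^n / d) *\<^sub>R (c::'a::real_normed_vector)) has_vector_derivative ((real n * (t - a)^(n-1) / d) *\<^sub>R c)) (at t within S)"
proof -
  have "((\<lambda>t. (t - a)^n) has_field_derivative (real n * (t - a)^(n-1))) (at t within S)"
    by (auto intro!: derivative_eq_intros)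
  then have "((\<lambda>t. (t - a)^n / d) has_field_derivative (real n * (t - a)^(n-1) / d)) (at t within S)"
    by (rule DERIV_cdivide)
  from has_vector_derivative_scaleR[OF this has_vector_derivative_const[of c]] show ?thesis by simp
qed

lemma taylor_chain:
  fixes L :: "real^'m::finite \<Rightarrow> real^'m" and u :: "real \<Rightarrow> real^'m"
  assumes L: "smooth_field L" and T: "T > 0"
    and sol: "\<forall>t\<in>{tn..tn+T}. (u has_vector_derivative L (u t)) (at t within {tn..tn+T})"
  obtains M where "M \<ge> 0"
    "\<And>s. s \<in> {0..T} \<Longrightarrow> norm (Fk L 1 (u (tn+s)) - Fk L 1 (u tn) - s *\<^sub>R Fk L 2 (u tn) - (s^2/2) *\<^sub>R Fk L 3 (u tn)) \<le> M * s^3"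
    "\<And>s. s \<in> {0..T} \<Longrightarrow> norm (u (tn+s) - u tn - s *\<^sub>R L (u tn) - (s^2/2) *\<^sub>R Fk L 1 (u tn) - (s^3/6) *\<^sub>R Fk L 2 (u tn) - (s^4/24) *\<^sub>R Fk L 3 (u tn)) \<le> M * s^5"
proof -
  define I where "I = {tn..tn+T}"
  define c where "c k = Fk L k (u tn)" for k
  have ch: "((\<lambda>t. Fk L k (u t)) has_vector_derivative Fk L (Suc k) (u t)) (at t within I)" if "t \<in> I" for k t
    unfolding Fk_Suc by (rule chain_Dop[OF Fk_smooth[OF L]]) (use sol that I_def in auto)
  have chs: "((\<lambda>t. Fk L 0 (u t)) has_vector_derivative Fk L 1 (u t)) (at t within I)"
     "((\<lambda>t. Fk L 1 (u t)) has_vector_derivative Fk L 2 (u t)) (at t within I)"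
     "((\<lambda>t. Fk L 2 (u t)) has_vector_derivative Fk L 3 (u t)) (at t within I)"
     "((\<lambda>t. Fk L 3 (u t)) has_vector_derivative Fk L 4 (u t)) (at t within I)" if "t \<in> I" for t
    using ch[OF that, of 0] ch[OF that, of 1] ch[OF that, of 2] ch[OF that, of 3] by (simp_all add: eval_nat_numeral)
  have ch0: "(u has_vector_derivative L (u t)) (at t within I)" if "t \<in> I" for t
    using sol that I_def by auto
  have "continuous_on I u"
    using ch0 has_vector_derivative_continuous continuous_on_eq_continuous_within by blast
  then have "continuous_on I (\<lambda>t. Fk L 4 (u t))"
    by (rule continuous_on_compose2[OF smooth_cont[OF Fk_smooth[OF L]]]) auto
  then have "compact ((\<lambda>t. Fk L 4 (u t)) ` I)"
    unfolding I_def by (intro compact_continuous_image) auto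
  then have "bounded ((\<lambda>t. Fk L 4 (u t)) ` I)" by (rule compact_imp_bounded)
  then obtain M0 where M0: "\<forall>x\<in>(\<lambda>t. Fk L 4 (u t)) ` I. norm x \<le> M0"
    unfolding bounded_iff by blast
  define M where "M = max M0 0"
  have M: "M \<ge> 0" "\<And>t. t \<in> I \<Longrightarrow> norm (Fk L 4 (u t)) \<le> M"
    using M0 unfolding M_def by auto
  have sI: "tn + s \<in> I" if "s \<in> {0..T}" for s using that I_def by auto
  define G1 where "G1 t = Fk L 3 (u t) - c 3" for t
  define G2 where "G2 t = Fk L 2 (u t) - c 2 - ((t - tn)^1/1) *\<^sub>R c 3" for t
  define G3 where "G3 t = Fk L 1 (u t) - c 1 - ((t - tn)^1/1) *\<^sub>R c 2 - ((t - tn)^2/2) *\<^sub>R c 3" for t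
  define G4 where "G4 t = L (u t) - c 0 - ((t - tn)^1/1) *\<^sub>R c 1 - ((t - tn)^2/2) *\<^sub>R c 2 - ((t - tn)^3/6) *\<^sub>R c 3" for t
  define G5 where "G5 t = u t - u tn - ((t - tn)^1/1) *\<^sub>R c 0 - ((t - tn)^2/2) *\<^sub>R c 1 - ((t - tn)^3/6) *\<^sub>R c 2 - ((t - tn)^4/24) *\<^sub>R c 3" for t
  have d1: "(G1 has_vector_derivative Fk L 4 (u t)) (at t within I)" if "t \<in> I" for t
    unfolding G1_def
    apply (rule has_vector_derivative_eq_rhs)
     apply (rule has_vector_derivative_diff chs[OF that] has_vector_derivative_const poly_vd)+
    by simp
  have d2: "(G2 has_vector_derivative G1 t) (at t within I)" if "t \<in> I" for t
    unfolding G2_def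
    apply (rule has_vector_derivative_eq_rhs)
     apply (rule has_vector_derivative_diff chs[OF that] has_vector_derivative_const poly_vd)+
    by (simp add: G1_def c_def vec_eq_iff field_simps)
  have d3: "(G3 has_vector_derivative G2 t) (at t within I)" if "t \<in> I" for t
    unfolding G3_def
    apply (rule has_vector_derivative_eq_rhs)
     apply (rule has_vector_derivative_diff chs[OF that] has_vector_derivative_const poly_vd)+
    by (simp add: G2_def c_def vec_eq_iff field_simps)
  have d4: "(G4 has_vector_derivative G3 t) (at t within I)" if "t \<in> I" for t
    unfolding G4_def
    apply (rule has_vector_derivative_eq_rhs)
     apply (rule has_vector_derivative_diff chs(1)[OF that, simplified] has_vector_derivative_const poly_vd)+
    by (simp add: G3_def c_def vec_eq_iff field_simps)
  have d5: "(G5 has_vector_derivative G4 t) (at t within I)" if "t \<in> I" for t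
    unfolding G5_def
    apply (rule has_vector_derivative_eq_rhs)
     apply (rule has_vector_derivative_diff ch0[OF that] has_vector_derivative_const poly_vd)+
    by (simp add: G4_def c_def vec_eq_iff field_simps)
  have b0: "norm (Fk L 4 (u (tn+s))) \<le> M * s^0" if "s \<in> {0..T}" for s
    using M(2)[OF sI[OF that]] by simp
  have b1: "norm (G1 (tn+s)) \<le> M * s^1" if "s \<in> {0..T}" for s
    using int_bound[of M tn T G1 "\<lambda>t. Fk L 4 (u t)" 0] M(1) d1 b0 I_def that by (simp add: G1_def c_def)
  have b2: "norm (G2 (tn+s)) \<le> M * s^2" if "s \<in> {0..T}" for s
  proof -
    have "norm (G2 (tn+s)) \<le> M * s^(Suc 1)"
      by (rule int_bound[of M tn T G2 G1 1]) (use M(1) d2 b1 I_def that in \<open>auto simp: G2_def c_def\<close>)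
    then show ?thesis by (simp add: eval_nat_numeral)
  qed
  have b3: "norm (G3 (tn+s)) \<le> M * s^3" if "s \<in> {0..T}" for s
  proof -
    have "norm (G3 (tn+s)) \<le> M * s^(Suc 2)"
      by (rule int_bound[of M tn T G3 G2 2]) (use M(1) d3 b2 I_def that in \<open>auto simp: G3_def c_def\<close>)
    then show ?thesis by (simp add: eval_nat_numeral)
  qed
  have b4: "norm (G4 (tn+s)) \<le> M * s^4" if "s \<in> {0..T}" for s
  proof -
    have "norm (G4 (tn+s)) \<le> M * s^(Suc 3)"
      by (rule int_bound[of M tn T G4 G3 3]) (use M(1) d4 b3 I_def that in \<open>auto simp: G4_def c_def\<close>)
    then show ?thesis by (simp add: eval_nat_numeral)
  qed
  have b5: "norm (G5 (tn+s)) \<le> M * s^5" if "s \<in> {0..T}" for s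
  proof -
    have "norm (G5 (tn+s)) \<le> M * s^(Suc 4)"
      by (rule int_bound[of M tn T G5 G4 4]) (use M(1) d5 b4 I_def that in \<open>auto simp: G5_def c_def\<close>)
    then show ?thesis by (simp add: eval_nat_numeral)
  qed
  show ?thesis
    by (rule that[OF M(1)]) (use b3 b5 in \<open>simp_all add: G3_def G5_def c_def\<close>)
qed

lemma dtL_Fk1: "smooth_field L \<Longrightarrow> dtL L = Fk L 1"
  by (auto intro!: ext simp: dtL_eq Fk_Suc)

lemma part1:
  fixes L :: "real^'m::finite \<Rightarrow> real^'m"
  assumes L: "smooth_field L"
  shows "fourth_order_accurate (1/2) 1 0 (1/3) (2/3) L"
  unfolding fourth_order_accurate_def
proof (intro allI impI, elim conjE)
  fix tn un T and u :: "real \<Rightarrow> real^'m"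
  assume T: "T > 0" and u0: "u tn = un"
    and sol: "\<forall>t\<in>{tn..tn+T}. (u has_vector_derivative L (u t)) (at t within {tn..tn+T})"
  obtain M where M0: "M \<ge> 0"
    and M3: "\<And>s. s \<in> {0..T} \<Longrightarrow> norm (Fk L 1 (u (tn+s)) - Fk L 1 (u tn) - s *\<^sub>R Fk L 2 (u tn) - (s^2/2) *\<^sub>R Fk L 3 (u tn)) \<le> M * s^3"
    and M5: "\<And>s. s \<in> {0..T} \<Longrightarrow> norm (u (tn+s) - u tn - s *\<^sub>R L (u tn) - (s^2/2) *\<^sub>R Fk L 1 (u tn) - (s^3/6) *\<^sub>R Fk L 2 (u tn) - (s^4/24) *\<^sub>R Fk L 3 (u tn)) \<le> M * s^5"
    using taylor_chain[OF L T sol] by blast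
  obtain K where K0: "K \<ge> 0" and K: "\<And>x y. x \<in> cball un 1 \<Longrightarrow> y \<in> cball un 1 \<Longrightarrow> norm (Fk L 1 x - Fk L 1 y) \<le> K * norm (x - y)"
    using smooth_lipschitz[OF Fk_smooth[OF L, of 1], of un] by blast
  define c0 where "c0 = L un"
  define c1 where "c1 = Fk L 1 un"
  define c2 where "c2 = Fk L 2 un"
  define c3 where "c3 = Fk L 3 un"
  define Q where "Q = M + norm c2 + norm c3"
  have Q0: "Q \<ge> 0" unfolding Q_def using M0 by simp
  define \<delta> where "\<delta> = min (min T 1) (1 / (2 * (norm c0 + norm c1 + Q + 1)))"
  have pos: "norm c0 + norm c1 + Q + 1 > 0" using Q0 by (simp add: add_nonneg_pos)
  have \<delta>0: "\<delta> > 0" unfolding \<delta>_def using T pos by simp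
  have bound: "norm (two_stage_step (1/2) 1 0 (1/3) (2/3) L h un - u (tn + h)) \<le> (K * Q + 2 * M) * h^5"
    if h0: "0 < h" and h\<delta>: "h < \<delta>" for h
  proof -
    have h1: "h \<le> 1" and hT: "h \<le> T" using h\<delta> unfolding \<delta>_def by auto
    have hsmall: "h * (norm c0 + norm c1 + Q + 1) \<le> 1/2"
    proof -
      have "h < 1 / (2 * (norm c0 + norm c1 + Q + 1))" using h\<delta> unfolding \<delta>_def by auto
      then show ?thesis using pos by (simp add: field_simps)
    qed
    define s where "s = h/2"
    have s0: "0 \<le> s" "s \<le> 1" "s \<in> {0..T}" "h \<in> {0..T}" using h0 h1 hT unfolding s_def by auto
    define us where "us = un + (1/2 * h) *\<^sub>R L un + ((1/2)\<^sup>2 * h\<^sup>2 / 2) *\<^sub>R Fk L 1 un"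
    have step: "two_stage_step (1/2) 1 0 (1/3) (2/3) L h un = un + h *\<^sub>R c0 + (h^2/2) *\<^sub>R ((1/3) *\<^sub>R c1 + (2/3) *\<^sub>R Fk L 1 us)"
      unfolding two_stage_step_def Let_def dtL_Fk1[OF L] us_def[symmetric] c0_def c1_def by simp
    have us_eq: "us = un + s *\<^sub>R c0 + (s^2/2) *\<^sub>R c1"
      unfolding us_def s_def c0_def c1_def by (simp add: power2_eq_square)
    define \<rho> where "\<rho> = u (tn+s) - un - s *\<^sub>R c0 - (s^2/2) *\<^sub>R c1"
    have \<rho>_eq: "\<rho> = (u (tn+s) - u tn - s *\<^sub>R L (u tn) - (s^2/2) *\<^sub>R Fk L 1 (u tn) - (s^3/6) *\<^sub>R Fk L 2 (u tn) - (s^4/24) *\<^sub>R Fk L 3 (u tn))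
        + (s^3/6) *\<^sub>R c2 + (s^4/24) *\<^sub>R c3"
      unfolding \<rho>_def c0_def c1_def c2_def c3_def u0 by simp
    have "norm \<rho> \<le> M * s^5 + (s^3/6) * norm c2 + (s^4/24) * norm c3"
      unfolding \<rho>_eq using M5[OF s0(3)] s0
      by (smt (verit, best) norm_scaleR norm_triangle_ineq zero_le_divide_iff zero_le_power abs_of_nonneg)
    also have "\<dots> \<le> M * s^3 + s^3 * norm c2 + s^3 * norm c3"
    proof -
      have "s^5 \<le> s^3" "s^4 \<le> s^3" using s0 by (simp_all add: power_decreasing)
      moreover have "s^3/6 \<le> s^3" "s^4/24 \<le> s^3" using \<open>s^4 \<le> s^3\<close> zero_le_power[OF s0(1), of 3] by linarith+
      ultimately have "M * s^5 \<le> M * s^3" "(s^3/6) * norm c2 \<le> s^3 * norm c2" "(s^4/24) * norm c3 \<le> s^3 * norm c3"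
        using M0 by (meson mult_left_mono mult_right_mono norm_ge_zero)+
      then show ?thesis by linarith
    qed
    finally have \<rho>b: "norm \<rho> \<le> Q * s^3" unfolding Q_def by (simp add: algebra_simps)
    have s3h: "s^3 \<le> h"
    proof -
      have "s^3 \<le> s^1" using s0 by (intro power_decreasing) auto
      then show ?thesis using h0 unfolding s_def by simp
    qed
    have us_un: "norm (us - un) \<le> h * (norm c0 + norm c1)"
    proof -
      have "norm (us - un) \<le> s * norm c0 + (s^2/2) * norm c1"
        unfolding us_eq using s0 by (simp add: norm_triangle_le)
      also have "\<dots> \<le> h * norm c0 + h * norm c1"
        using s0 h0 h1 unfolding s_def by (intro add_mono mult_right_mono) (auto simp: power2_eq_square)
      finally show ?thesis by (simp add: algebra_simps)
    qed
    have ue: "u (tn+s) = us + \<rho>" unfolding \<rho>_def us_eq by simp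
    have us_in: "us \<in> cball un 1"
    proof -
      have "h * (norm c0 + norm c1) \<le> h * (norm c0 + norm c1 + Q + 1)" using h0 Q0 by simp
      then show ?thesis using us_un hsmall by (simp add: dist_norm norm_minus_commute)
    qed
    have u_in: "u (tn+s) \<in> cball un 1"
    proof -
      have "norm (u (tn+s) - un) \<le> norm (us - un) + norm \<rho>" unfolding ue
        by (metis add_diff_eq diff_add_eq norm_triangle_ineq)
      also have "\<dots> \<le> h * (norm c0 + norm c1) + Q * h" using us_un \<rho>b s3h Q0
        by (meson add_mono mult_left_mono order_trans)
      also have "\<dots> \<le> h * (norm c0 + norm c1 + Q + 1)" using h0 by (simp add: algebra_simps)
      finally show ?thesis using hsmall by (simp add: dist_norm norm_minus_commute)
    qed
    have lip: "norm (Fk L 1 us - Fk L 1 (u (tn+s))) \<le> K * (Q * s^3)"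
    proof -
      have "norm (Fk L 1 us - Fk L 1 (u (tn+s))) \<le> K * norm (us - u (tn+s))" by (rule K[OF us_in u_in])
      also have "norm (us - u (tn+s)) = norm \<rho>" unfolding ue by simp
      finally show ?thesis using \<rho>b K0 by (meson mult_left_mono order_trans)
    qed
    define \<sigma> where "\<sigma> = Fk L 1 (u (tn+s)) - c1 - s *\<^sub>R c2 - (s^2/2) *\<^sub>R c3"
    have \<sigma>b: "norm \<sigma> \<le> M * s^3" unfolding \<sigma>_def c1_def c2_def c3_def using M3[OF s0(3)] u0 by simp
    define \<tau> where "\<tau> = u (tn+h) - un - h *\<^sub>R c0 - (h^2/2) *\<^sub>R c1 - (h^3/6) *\<^sub>R c2 - (h^4/24) *\<^sub>R c3"
    have \<tau>b: "norm \<tau> \<le> M * h^5" unfolding \<tau>_def c0_def c1_def c2_def c3_def using M5[OF s0(4)] u0 by simp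
    have err: "two_stage_step (1/2) 1 0 (1/3) (2/3) L h un - u (tn + h)
       = (h^2/3) *\<^sub>R (Fk L 1 us - Fk L 1 (u (tn+s))) + (h^2/3) *\<^sub>R \<sigma> - \<tau>"
      unfolding step \<sigma>_def \<tau>_def s_def by (simp add: vec_eq_iff field_simps eval_nat_numeral)
    have "norm (two_stage_step (1/2) 1 0 (1/3) (2/3) L h un - u (tn + h))
        \<le> (h^2/3) * (K * (Q * s^3)) + (h^2/3) * (M * s^3) + M * h^5"
    proof -
      have "norm ((h^2/3) *\<^sub>R (Fk L 1 us - Fk L 1 (u (tn+s)))) \<le> (h^2/3) * (K * (Q * s^3))"
        using lip by (simp add: mult_left_mono)
      moreover have "norm ((h^2/3) *\<^sub>R \<sigma>) \<le> (h^2/3) * (M * s^3)"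
        using \<sigma>b by (simp add: mult_left_mono)
      ultimately show ?thesis unfolding err using \<tau>b
        by (smt (verit) norm_triangle_ineq4 norm_triangle_ineq)
    qed
    also have "\<dots> \<le> (K * Q + 2 * M) * h^5"
    proof -
      have s3: "s^3 = h^3/8" unfolding s_def by (simp add: power_divide)
      have "(h^2/3) * (K * (Q * s^3)) \<le> K * Q * h^5"
        using K0 Q0 h0 unfolding s3 by (simp add: field_simps power_add[symmetric] mult_left_mono)
      moreover have "(h^2/3) * (M * s^3) \<le> M * h^5"
        using M0 h0 unfolding s3 by (simp add: field_simps power_add[symmetric] mult_left_mono)
      ultimately show ?thesis by (simp add: algebra_simps)
    qed
    finally show ?thesis .
  qed
  show "(\<lambda>dt. norm (two_stage_step (1/2) 1 0 (1/3) (2/3) L dt un - u (tn + dt))) \<in> O[at_right 0](\<lambda>dt. dt ^ 5)"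
  proof (rule bigoI[where c = "K * Q + 2 * M"])
    show "\<forall>\<^sub>F x in at_right 0. norm (norm (two_stage_step (1/2) 1 0 (1/3) (2/3) L x un - u (tn + x))) \<le> (K * Q + 2 * M) * norm (x ^ 5)"
      unfolding eventually_at_right_field
      using \<delta>0 bound by (intro exI[of _ \<delta>]) (auto simp: abs_of_pos)
  qed
qed

lemma vec_sum_axis: "(\<Sum>k\<in>UNIV. f k *\<^sub>R axis k (1::real)) = (\<chi> k. f k)"
  by (simp add: vec_eq_iff axis_def if_distrib sum.delta cong: if_cong)

lemma const_has: "((\<lambda>t. (\<lambda>x::real^'m::finite. c::real^'m) (x + t *\<^sub>R axis i 1)) has_vector_derivative 0) (at 0)"
  by simp

lemma pd_const: "partial_deriv i (\<lambda>x::real^'m::finite. c::real^'m) = (\<lambda>x. 0)"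
  unfolding partial_deriv_def by (auto intro!: ext vector_derivative_at)

lemma pd_id: "partial_deriv i (\<lambda>x::real^'m::finite. x) = (\<lambda>x. axis i 1)"
  unfolding partial_deriv_def
  by (auto intro!: ext vector_derivative_at derivative_eq_intros)

lemma smooth_const: "smooth_field (\<lambda>x::real^'m::finite. c::real^'m)"
proof (rule smooth_coind[where X = "range (\<lambda>c. \<lambda>x::real^'m. c)"])
  fix g :: "real^'m \<Rightarrow> real^'m" assume "g \<in> range (\<lambda>c. \<lambda>x::real^'m. c)"
  then obtain c where g: "g = (\<lambda>x. c)" by auto
  show "continuous_on UNIV g \<and> dirdiff g \<and> (\<forall>i. partial_deriv i g \<in> range (\<lambda>c. \<lambda>x::real^'m. c))"
    unfolding g dirdiff_def pd_const by auto
qed auto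

lemma smooth_id: "smooth_field (\<lambda>x::real^'m::finite. x)"
proof (rule smooth_coind[where X = "insert (\<lambda>x. x) (range (\<lambda>c. \<lambda>x::real^'m. c))"])
  fix g :: "real^'m \<Rightarrow> real^'m" assume "g \<in> insert (\<lambda>x. x) (range (\<lambda>c. \<lambda>x::real^'m. c))"
  then show "continuous_on UNIV g \<and> dirdiff g \<and> (\<forall>i. partial_deriv i g \<in> insert (\<lambda>x. x) (range (\<lambda>c. \<lambda>x::real^'m. c)))"
    by (auto simp: dirdiff_def pd_const pd_id intro!: continuous_intros derivative_intros)
qed auto

definition sq :: "real^'m::finite \<Rightarrow> real^'m" where "sq x = (\<chi> k. (x$k)^2)"

lemma smooth_sq: "smooth_field (sq :: real^'m::finite \<Rightarrow> real^'m)"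
proof -
  obtain xs :: "'m list" where xs: "set xs = UNIV" "distinct xs"
    using finite_distinct_list[of "UNIV :: 'm set"] by auto
  define ts where "ts = map (\<lambda>j. (j, (\<lambda>x::real^'m. x), tm [(j, (\<lambda>x::real^'m. x), (\<lambda>x::real^'m. axis j (1::real)))])) xs"
  have "sq = tm ts"
  proof
    fix x :: "real^'m"
    have "tm ts x = sum_list (map (\<lambda>j. (x$j)^2 *\<^sub>R axis j 1) xs)"
      unfolding ts_def tm_def by (simp add: o_def power2_eq_square)
    also have "\<dots> = (\<Sum>j\<in>UNIV. (x$j)^2 *\<^sub>R axis j 1)"
      using xs by (simp add: sum_list_distinct_conv_sum_set)
    finally show "sq x = tm ts x" by (simp add: vec_sum_axis sq_def)
  qed
  moreover have "smooth_field (tm ts)"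
    unfolding ts_def by (rule tm_smooth) (auto intro!: tm_smooth smooth_id smooth_const)
  ultimately show ?thesis by simp
qed

lemma dtL_id: "dtL (\<lambda>x::real^'m::finite. x) x = x"
  by (simp add: dtL_eq[OF smooth_id] Dop_def pd_id vec_sum_axis[of "\<lambda>k. x$k"])

lemma pd_sq: "partial_deriv i sq x = (\<chi> k. 2 * x$k * axis i 1 $ k)"
proof -
  have e: "(\<lambda>t. sq (x + t *\<^sub>R axis i 1)) = (\<lambda>t. \<Sum>k\<in>UNIV. ((x$k + t * axis i 1 $ k)^2) *\<^sub>R axis k 1)"
    by (simp add: sq_def vec_sum_axis)
  have "((\<lambda>t. sq (x + t *\<^sub>R axis i 1)) has_vector_derivative (\<Sum>k\<in>UNIV. (2 * x$k * axis i 1 $ k) *\<^sub>R axis k 1)) (at 0)"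
    unfolding e
    by (rule has_vector_derivative_sum, rule has_vector_derivative_eq_rhs,
        rule has_vector_derivative_scaleR, auto intro!: derivative_eq_intros)
  then show ?thesis unfolding partial_deriv_def vec_sum_axis by (rule vector_derivative_at)
qed

lemma dtL_sq: "dtL sq x = (\<chi> k. 2 * (x$k)^3)"
proof -
  have "dtL sq x = (\<Sum>i\<in>UNIV. (2 * (x$i)^3) *\<^sub>R axis i 1)"
    unfolding dtL_eq[OF smooth_sq] Dop_def pd_sq
    by (intro sum.cong refl) (simp add: vec_eq_iff sq_def axis_def power3_eq_cube power2_eq_square)
  then show ?thesis by (simp add: vec_sum_axis)
qed

lemma poly_zero_aux:
  fixes d :: "nat \<Rightarrow> real"
  assumes ev: "eventually (\<lambda>h. \<bar>\<Sum>j\<le>N. d j * h^j\<bar> \<le> C * h^5) (at_right 0)" and N: "4 \<le> N"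
  shows "k < 5 \<Longrightarrow> d k = 0"
proof (induction k rule: less_induct)
  case (less k)
  have kN: "k \<le> N" using less.prems N by simp
  define P where "P h = (\<Sum>j\<in>{k..N}. d j * h^(j-k))" for h :: real
  have eq: "(\<Sum>j\<le>N. d j * h^j) = h^k * P h" for h
  proof -
    have "(\<Sum>j\<le>N. d j * h^j) = (\<Sum>j\<in>{k..N}. d j * h^j)"
      using less.IH less.prems by (intro sum.mono_neutral_right) auto
    also have "\<dots> = (\<Sum>j\<in>{k..N}. h^k * (d j * h^(j-k)))"
      by (intro sum.cong refl) (auto simp: power_add[symmetric])
    finally show ?thesis unfolding P_def by (simp add: sum_distrib_left)
  qed
  have P0: "P 0 = d k"
  proof -
    have "P 0 = (\<Sum>j\<in>{k..N}. if j = k then d j else 0)"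
      unfolding P_def by (intro sum.cong refl) (auto simp: power_0_left)
    also have "\<dots> = d k" by (subst sum.delta) (use kN in auto)
    finally show ?thesis .
  qed
  have "continuous (at 0) P" unfolding P_def by (intro continuous_intros)
  then have "(P \<longlongrightarrow> P 0) (at 0)" by (simp add: isCont_def)
  then have "(P \<longlongrightarrow> d k) (at 0)" by (simp add: P0)
  then have "(P \<longlongrightarrow> d k) (at_right 0)" by (simp add: filterlim_at_split)
  then have t1: "((\<lambda>h. \<bar>P h\<bar>) \<longlongrightarrow> \<bar>d k\<bar>) (at_right 0)" by (rule tendsto_rabs)
  have "((\<lambda>h. C * h^(5-k)) \<longlongrightarrow> C * 0^(5-k)) (at_right (0::real))" by (intro tendsto_intros)
  moreover have "C * (0::real)^(5-k) = 0" using less.prems by (simp add: power_0_left)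
  ultimately have t2: "((\<lambda>h. C * h^(5-k)) \<longlongrightarrow> 0) (at_right (0::real))" by simp
  have ev2: "eventually (\<lambda>h. \<bar>P h\<bar> \<le> C * h^(5-k)) (at_right 0)"
    using ev eventually_at_right_less[of "0::real"]
  proof (eventually_elim)
    case (elim h)
    have "h^k * \<bar>P h\<bar> \<le> C * h^5" using elim eq[of h] by (simp add: abs_mult)
    also have "C * h^5 = h^k * (C * h^(5-k))" using less.prems
      by (simp add: power_add[symmetric])
    finally show ?case using elim by (simp add: mult_le_cancel_left_pos)
  qed
  have "\<bar>d k\<bar> \<le> 0"
    by (rule tendsto_le[OF _ t2 t1 ev2]) simp
  then show ?case by simp
qed

lemma poly_zero:
  fixes d :: "nat \<Rightarrow> real"
  assumes ev: "eventually (\<lambda>h. \<bar>\<Sum>j\<le>N. d j * h^j\<bar> \<le> C * h^5) (at_right 0)" and N: "4 \<le> N"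
  shows "d 1 = 0 \<and> d 2 = 0 \<and> d 3 = 0 \<and> d 4 = 0"
  using poly_zero_aux[OF ev N] by auto

lemma coef_extract:
  fixes v :: "real^'m::finite" and d :: "nat \<Rightarrow> real"
  assumes O: "(\<lambda>dt. norm (two_stage_step A B0 B1 C0 C1 L dt v - u (0 + dt))) \<in> O[at_right 0](\<lambda>dt. dt ^ 5)"
    and comp: "\<And>h. (two_stage_step A B0 B1 C0 C1 L h v - u (0 + h)) $ i = (\<Sum>j\<le>N. d j * h^j) - r h"
    and rb: "eventually (\<lambda>h. \<bar>r h\<bar> \<le> K * h^5) (at_right 0)"
    and N: "4 \<le> N"
  shows "d 1 = 0 \<and> d 2 = 0 \<and> d 3 = 0 \<and> d 4 = 0"
proof -
  obtain c where ev: "eventually (\<lambda>h. norm (norm (two_stage_step A B0 B1 C0 C1 L h v - u (0 + h))) \<le> c * norm (h^5)) (at_right (0::real))"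
    using landau_o.bigE[OF O] by blast
  have "eventually (\<lambda>h. \<bar>\<Sum>j\<le>N. d j * h^j\<bar> \<le> (c + K) * h^5) (at_right 0)"
    using ev rb eventually_at_right_less[of "0::real"]
  proof eventually_elim
    case (elim h)
    have "\<bar>\<Sum>j\<le>N. d j * h^j\<bar> \<le> \<bar>(two_stage_step A B0 B1 C0 C1 L h v - u (0 + h)) $ i\<bar> + \<bar>r h\<bar>"
      unfolding comp by linarith
    also have "\<dots> \<le> norm (two_stage_step A B0 B1 C0 C1 L h v - u (0 + h)) + K * h^5"
      using elim component_le_norm_cart[of "two_stage_step A B0 B1 C0 C1 L h v - u (0 + h)" i] by (intro add_mono) auto
    also have "\<dots> \<le> c * h^5 + K * h^5" using elim by (simp add: abs_of_pos)
    finally show ?case by (simp add: algebra_simps)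
  qed
  then show ?thesis by (rule poly_zero[OF _ N])
qed

lemma lin_case:
  assumes H: "fourth_order_accurate A B0 B1 C0 C1 (\<lambda>x::real^'m::finite. x)"
  shows "B0 + B1 - 1 = 0 \<and> B1*A + (C0+C1)/2 - 1/2 = 0 \<and> B1*A^2/2 + C1*A/2 - 1/6 = 0 \<and> C1*A^2/4 - 1/24 = 0"
proof -
  define v :: "real^'m" where "v = vec 1"
  define u where "u t = exp t *\<^sub>R v" for t
  have sol: "\<forall>t\<in>{0..0+1}. (u has_vector_derivative (\<lambda>x. x) (u t)) (at t within {0..0+1})"
  proof
    fix t :: real
    have "(u has_vector_derivative (exp t *\<^sub>R 0 + exp t *\<^sub>R v)) (at t within {0..0+1})"
      unfolding u_def by (intro has_vector_derivative_scaleR) (auto intro!: derivative_eq_intros)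
    then show "(u has_vector_derivative (\<lambda>x. x) (u t)) (at t within {0..0+1})" by (simp add: u_def)
  qed
  have O: "(\<lambda>dt. norm (two_stage_step A B0 B1 C0 C1 (\<lambda>x. x) dt v - u (0 + dt))) \<in> O[at_right 0](\<lambda>dt. dt ^ 5)"
    using H unfolding fourth_order_accurate_def
    apply -
    apply (drule spec[of _ 0], drule spec[of _ v], drule spec[of _ u], drule spec[of _ 1])
    using sol by (simp add: u_def)
  define d where "d j = [0, B0+B1-1, B1*A + (C0+C1)/2 - 1/2, B1*A^2/2 + C1*A/2 - 1/6, C1*A^2/4 - 1/24] ! j" for j
  define r where "r h = exp h - (\<Sum>m<5. h^m / fact m)" for h :: real
  have tay: "(\<Sum>m<5. h^m / fact m) = 1 + h + h^2/2 + h^3/6 + h^4/24" for h :: real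
    by (simp add: eval_nat_numeral)
  have comp: "(two_stage_step A B0 B1 C0 C1 (\<lambda>x. x) h v - u (0 + h)) $ i = (\<Sum>j\<le>4. d j * h^j) - r h" for h
  proof -
    have c1: "(two_stage_step A B0 B1 C0 C1 (\<lambda>x. x) h v - u (0 + h)) $ i = 1 + h*(B0 + B1*(1 + A*h + A^2*h^2/2)) + h^2/2*(C0 + C1*(1 + A*h + A^2*h^2/2)) - exp h"
      by (simp add: two_stage_step_def Let_def dtL_id v_def u_def)
    have s: "(\<Sum>j\<le>4. d j * h^j) = d 0 + d 1 * h + d 2 * h^2 + d 3 * h^3 + d 4 * h^4"
      by (simp add: eval_nat_numeral)
    have c2: "1 + h*(B0 + B1*(1 + A*h + A^2*h^2/2)) + h^2/2*(C0 + C1*(1 + A*h + A^2*h^2/2)) - (1 + h + h^2/2 + h^3/6 + h^4/24) = (\<Sum>j\<le>4. d j * h^j)"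
      unfolding s by (simp add: d_def algebra_simps power2_eq_square power3_eq_cube eval_nat_numeral)
    show ?thesis unfolding c1 r_def tay using c2 by linarith
  qed
  have rb: "eventually (\<lambda>h. \<bar>r h\<bar> \<le> (3/120) * h^5) (at_right 0)"
  proof -
    have "eventually (\<lambda>h. h < (1::real)) (at_right 0)" unfolding eventually_at_right_field by (auto intro!: exI[of _ 1])
    with eventually_at_right_less[of "0::real"] show ?thesis
    proof eventually_elim
      case (elim h)
      obtain t where t: "\<bar>t\<bar> \<le> \<bar>h\<bar>" and e: "exp h = (\<Sum>m<5. h^m / fact m) + (exp t / fact 5) * h^5"
        using Maclaurin_exp_le[of h 5] by blast
      have "exp t \<le> exp 1" using t elim by simp
      also have "\<dots> \<le> 3" by (rule exp_le)
      finally have "exp t \<le> 3" .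
      moreover have "(fact 5 :: real) = 120" by (simp add: eval_nat_numeral)
      ultimately have "\<bar>r h\<bar> = (exp t / 120) * h^5" using e elim unfolding r_def by (simp add: abs_of_pos)
      also have "\<dots> \<le> (3/120) * h^5" using \<open>exp t \<le> 3\<close> elim by (intro mult_right_mono) auto
      finally show ?case .
    qed
  qed
  have "d 1 = 0 \<and> d 2 = 0 \<and> d 3 = 0 \<and> d 4 = 0"
    by (rule coef_extract[OF O comp rb]) simp
  then show ?thesis by (simp add: d_def)
qed

lemma sq_case:
  assumes H: "fourth_order_accurate A B0 B1 C0 C1 (sq :: real^'m::finite \<Rightarrow> real^'m)"
  shows "2*A^3*B1 + 6*A^2*C1 - 1 = 0"
proof -
  define v :: "real^'m" where "v = vec 1"
  define u where "u t = (1/(1-t)) *\<^sub>R v" for t :: real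
  have sol: "\<forall>t\<in>{0..0+1/2}. (u has_vector_derivative sq (u t)) (at t within {0..0+1/2})"
  proof
    fix t :: real assume t: "t \<in> {0..0+1/2}"
    have "((\<lambda>t. 1/(1-t)) has_field_derivative (1/(1-t))^2) (at t within {0..0+1/2})"
      using t by (auto intro!: derivative_eq_intros simp: power2_eq_square field_simps)
    then have "(u has_vector_derivative ((1/(1-t)) *\<^sub>R 0 + (1/(1-t))^2 *\<^sub>R v)) (at t within {0..0+1/2})"
      unfolding u_def by (intro has_vector_derivative_scaleR) auto
    moreover have "(1/(1-t)) *\<^sub>R 0 + (1/(1-t))^2 *\<^sub>R v = sq (u t)"
      by (simp add: u_def sq_def v_def vec_eq_iff)
    ultimately show "(u has_vector_derivative sq (u t)) (at t within {0..0+1/2})" by simp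
  qed
  have O: "(\<lambda>dt. norm (two_stage_step A B0 B1 C0 C1 sq dt v - u (0 + dt))) \<in> O[at_right 0](\<lambda>dt. dt ^ 5)"
    using H unfolding fourth_order_accurate_def
    apply -
    apply (drule spec[of _ 0], drule spec[of _ v], drule spec[of _ u], drule spec[of _ "1/2"])
    using sol by (simp add: u_def)
  define d where "d j = [0, B0+B1-1, 2*A*B1 + C0 + C1 - 1, 3*A^2*B1 + 3*A*C1 - 1, 2*A^3*B1 + 6*A^2*C1 - 1,
      A^4*B1 + 7*A^3*C1, 6*A^4*C1, 3*A^5*C1, A^6*C1] ! j" for j
  define r where "r h = 1/(1-h) - (1 + h + h^2 + h^3 + h^4)" for h :: real
  have comp: "(two_stage_step A B0 B1 C0 C1 sq h v - u (0 + h)) $ i = (\<Sum>j\<le>8. d j * h^j) - r h" for h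
  proof -
    define q where "q = 1 + A*h + A^2*h^2/2*2"
    have c1: "(two_stage_step A B0 B1 C0 C1 sq h v - u (0 + h)) $ i = 1 + h*(B0 + B1*q^2) + h^2/2*(C0*2 + C1*(2*q^3)) - 1/(1-h)"
      by (simp add: two_stage_step_def Let_def dtL_sq sq_def v_def u_def q_def)
    have s: "(\<Sum>j\<le>8. d j * h^j) = d 0 + d 1 * h + d 2 * h^2 + d 3 * h^3 + d 4 * h^4 + d 5 * h^5 + d 6 * h^6 + d 7 * h^7 + d 8 * h^8"
      by (simp add: eval_nat_numeral)
    have c2: "1 + h*(B0 + B1*q^2) + h^2/2*(C0*2 + C1*(2*q^3)) - (1 + h + h^2 + h^3 + h^4) = (\<Sum>j\<le>8. d j * h^j)"
      unfolding s q_def by (simp add: d_def algebra_simps power2_eq_square power3_eq_cube eval_nat_numeral)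
    show ?thesis unfolding c1 r_def using c2 by linarith
  qed
  have rb: "eventually (\<lambda>h. \<bar>r h\<bar> \<le> 2 * h^5) (at_right 0)"
  proof -
    have "eventually (\<lambda>h. h < (1/2::real)) (at_right 0)" unfolding eventually_at_right_field by (auto intro!: exI[of _ "1/2"])
    with eventually_at_right_less[of "0::real"] show ?thesis
    proof eventually_elim
      case (elim h)
      have req: "r h = h^5 / (1-h)" using elim unfolding r_def by (simp add: field_simps eval_nat_numeral)
      have "r h \<le> h^5 / (1/2)" unfolding req using elim by (intro divide_left_mono) auto
      moreover have "r h \<ge> 0" unfolding req using elim by simp
      ultimately show ?case by simp
    qed
  qed
  have "d 1 = 0 \<and> d 2 = 0 \<and> d 3 = 0 \<and> d 4 = 0"
    by (rule coef_extract[OF O comp rb]) simp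
  then show ?thesis by (simp add: d_def)
qed

lemma params_unique:
  fixes A B0 B1 C0 C1 :: real
  assumes e1: "B0 + B1 - 1 = 0" and e2: "B1*A + (C0+C1)/2 - 1/2 = 0" and e3: "B1*A^2/2 + C1*A/2 - 1/6 = 0"
    and e4: "C1*A^2/4 - 1/24 = 0" and e5: "2*A^3*B1 + 6*A^2*C1 - 1 = 0"
  shows "A = 1/2 \<and> B0 = 1 \<and> B1 = 0 \<and> C0 = 1/3 \<and> C1 = 2/3"
proof -
  have c4: "C1*A^2 = 1/6" using e4 by simp
  have "A^3*B1 = 0" using e5 c4 by (simp add: algebra_simps)
  moreover have "A \<noteq> 0" using c4 by auto
  ultimately have B1: "B1 = 0" by simp
  have c3: "C1*A = 1/3" using e3 B1 by (simp add: algebra_simps)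
  have "A * (C1*A) = C1*A^2" by (simp add: power2_eq_square)
  then have A: "A = 1/2" using c3 c4 by simp
  have C1: "C1 = 2/3" using c3 A by simp
  have C0: "C0 = 1/3" using e2 B1 C1 by simp
  have B0: "B0 = 1" using e1 B1 by simp
  show ?thesis using A B0 B1 C0 C1 by simp
qed

theorem proposition2p1:
  shows "(\<forall>L :: real^'m::finite \<Rightarrow> real^'m. smooth_field L \<longrightarrow>
            fourth_order_accurate (1/2) 1 0 (1/3) (2/3) L)
       \<and> (\<forall>A B0 B1 C0 C1.
            (\<forall>L :: real^'m \<Rightarrow> real^'m. smooth_field L \<longrightarrow> fourth_order_accurate A B0 B1 C0 C1 L)
            \<longrightarrow> A = 1/2 \<and> B0 = 1 \<and> B1 = 0 \<and> C0 = 1/3 \<and> C1 = 2/3)"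
proof (rule conjI; intro allI impI)
  fix L :: "real^'m \<Rightarrow> real^'m" assume "smooth_field L"
  then show "fourth_order_accurate (1/2) 1 0 (1/3) (2/3) L" by (rule part1)
next
  fix A B0 B1 C0 C1 :: real
  assume H: "\<forall>L :: real^'m \<Rightarrow> real^'m. smooth_field L \<longrightarrow> fourth_order_accurate A B0 B1 C0 C1 L"
  have l: "fourth_order_accurate A B0 B1 C0 C1 (\<lambda>x::real^'m. x)" using H smooth_id by blast
  have s: "fourth_order_accurate A B0 B1 C0 C1 (sq :: real^'m \<Rightarrow> real^'m)" using H smooth_sq by blast
  show "A = 1/2 \<and> B0 = 1 \<and> B1 = 0 \<and> C0 = 1/3 \<and> C1 = 2/3"
    using lin_case[OF l] sq_case[OF s] by (intro params_unique) auto
qed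

end
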